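(* For $s\ge1$ let $E(s,0)$ be the number of pairs $(U,W)$ of $p$-strings of length $s$ whose meander graph $\Gamma^1_{2s-1}$ has no pierced circle. Then $\frac{E(s,0)}{C_s^2}\to 0$ as $s\to\infty$.
   Context: A $p$-string of length $s$ is a correctly matched (balanced) string of $s$ left and $s$ right parentheses; there are $C_s=\frac{1}{s+1}\binom{2s}{s}$ of them. Given two $p$-strings $U$ (upper) and $W$ (lower) of length $s$, the meander graph $\Gamma^1_{2s-1}$ is obtained by marking points $0,1,\dots,2s$ on the $x$-axis, taking the segment $[0,2s]$, joining points $a,b$ by an upper semicircle for each matched pair of $U$ at positions $a<b$ (positions $1,\dots,2s$), and joining points $a-1,b-1$ by a lower semicircle for each matched pair of $W$ at positions $a<b$; the vertices are the points $1,\dots,2s-1$. A pierced circle at position $i$ ($1\le i\le 2s-2$) is present if vertices $i$ and $i+1$ are joined both by an upper and by a lower semicircle. *)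

theory Defs
  imports Complex_Main
begin

text \<open>A parenthesis string is a bool list: True = left parenthesis, False = right.\<close>

definition height :: "bool list \<Rightarrow> int" where
  "height xs = (\<Sum>x\<leftarrow>xs. if x then 1 else -1)"

definition balanced :: "bool list \<Rightarrow> bool" where
  "balanced xs \<longleftrightarrow> (\<forall>k\<le>length xs. height (take k xs) \<ge> 0) \<and> height xs = 0"

definition pstring :: "nat \<Rightarrow> bool list \<Rightarrow> bool" where
  "pstring s xs \<longleftrightarrow> length xs = 2 * s \<and> balanced xs"

text \<open>Positions a < b (1-indexed) form a matched pair of the string U.\<close>
definition matched :: "bool list \<Rightarrow> nat \<Rightarrow> nat \<Rightarrow> bool" where
  "matched U a b \<longleftrightarrow> 1 \<le> a \<and> a < b \<and> b \<le> length U \<and> U ! (a - 1) \<and> \<not> U ! (b - 1)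
      \<and> balanced (take (b - a - 1) (drop a U))"

text \<open>Pierced circle at i: vertices i, i+1 joined by an upper semicircle (U pair (i,i+1))
  and by a lower semicircle (W pair (i+1,i+2), shifted down by one).\<close>
definition pierced :: "nat \<Rightarrow> bool list \<Rightarrow> bool list \<Rightarrow> nat \<Rightarrow> bool" where
  "pierced s U W i \<longleftrightarrow> 1 \<le> i \<and> i \<le> 2 * s - 2 \<and> matched U i (i + 1) \<and> matched W (i + 1) (i + 2)"

definition E0 :: "nat \<Rightarrow> nat" where
  "E0 s = card {(U, W). pstring s U \<and> pstring s W \<and> \<not> (\<exists>i. pierced s U W i)}"

definition catalan :: "nat \<Rightarrow> real" where
  "catalan s = real ((2 * s) choose s) / real (s + 1)"

end

theory Submission imports Defs "HOL-Real_Asymp.Real_Asymp" begin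

definition L :: "nat \<Rightarrow> bool list set" where "L n = {xs. length xs = n}"

lemma L_fin: "finite (L n)" and L_card: "card (L n) = 2 ^ n"
  using finite_lists_length_eq[of "UNIV::bool set" n] card_lists_length_eq[of "UNIV::bool set" n]
  by (simp_all add: L_def)

definition pat :: "bool list \<Rightarrow> bool list \<Rightarrow> nat \<Rightarrow> bool" where
  "pat U W j \<longleftrightarrow> U!j \<and> \<not> U!(j+1) \<and> W!(j+1) \<and> \<not> W!(j+2)"

definition S :: "nat \<Rightarrow> nat \<Rightarrow> (bool list \<times> bool list) set" where
  "S m n = {(U,W). length U = 4*m+n \<and> length W = 4*m+n \<and> (\<forall>k<m. \<not> pat U W (4*k))}"

definition B :: "(bool list \<times> bool list) set" where
  "B = {(a,b). length a = 4 \<and> length b = 4 \<and> \<not> pat a b 0}"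

lemma S_fin: "finite (S m n)"
  by (rule finite_subset[OF _ finite_cartesian_product[OF L_fin L_fin]]) (auto simp: S_def L_def)

lemma B_fin: "finite B"
  by (rule finite_subset[OF _ finite_cartesian_product[OF L_fin L_fin]]) (auto simp: B_def L_def)

lemma B_card: "card B \<le> 255"
proof -
  have "B \<subseteq> L 4 \<times> L 4 - {([True,False,False,False],[False,True,False,False])}"
    by (auto simp: B_def L_def pat_def)
  moreover have "([True,False,False,False],[False,True,False,False]) \<in> L 4 \<times> L 4"
    by (simp add: L_def)
  ultimately show ?thesis
    using card_mono[OF _ \<open>B \<subseteq> _\<close>] L_fin L_card
    by (simp add: card_Diff_singleton card_cartesian_product)
qed

lemma S_card: "card (S m n) \<le> 255 ^ m * 4 ^ n"
proof (induction m)
  case 0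
  have "S 0 n = L n \<times> L n" by (auto simp: S_def L_def)
  then show ?case by (simp add: card_cartesian_product L_card power_mult_distrib[symmetric])
next
  case (Suc m)
  let ?f = "\<lambda>((a,b),(U,W)). (a@U, b@W)"
  have sub: "S (Suc m) n \<subseteq> ?f ` (B \<times> S m n)"
  proof
    fix p assume p: "p \<in> S (Suc m) n"
    obtain U W where pUW: "p = (U,W)" by (cases p)
    have lU: "length U = 4 + (4*m+n)" and lW: "length W = 4 + (4*m+n)"
      and np: "\<And>k. k < Suc m \<Longrightarrow> \<not> pat U W (4*k)" using p pUW by (auto simp: S_def)
    have "(take 4 U, take 4 W) \<in> B"
      using np[of 0] lU lW by (auto simp: B_def pat_def)
    moreover have "(drop 4 U, drop 4 W) \<in> S m n"
    proof -
      have "\<not> pat (drop 4 U) (drop 4 W) (4*k)" if "k < m" for k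
        using np[of "Suc k"] that lU lW by (simp add: pat_def algebra_simps)
      then show ?thesis using lU lW by (simp add: S_def)
    qed
    ultimately show "p \<in> ?f ` (B \<times> S m n)"
      using pUW by (auto intro!: image_eqI[where x="((take 4 U, take 4 W),(drop 4 U, drop 4 W))"])
  qed
  have "card (S (Suc m) n) \<le> card (?f ` (B \<times> S m n))"
    by (rule card_mono[OF _ sub]) (simp add: B_fin S_fin)
  also have "\<dots> \<le> card (B \<times> S m n)" by (rule card_image_le) (simp add: B_fin S_fin)
  also have "\<dots> = card B * card (S m n)" by (simp add: card_cartesian_product)
  also have "\<dots> \<le> 255 * (255 ^ m * 4 ^ n)" using B_card Suc.IH by (intro mult_mono) auto
  finally show ?case by simp
qed


lemma E0_le: "E0 s \<le> 255 ^ ((s-1) div 2) * 4 ^ (2*s - 4*((s-1) div 2))"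
proof -
  let ?m = "(s-1) div 2"
  have sub: "{(U, W). pstring s U \<and> pstring s W \<and> \<not> (\<exists>i. pierced s U W i)} \<subseteq> S ?m (2*s - 4*?m)"
  proof safe
    fix U W
    assume U: "pstring s U" and W: "pstring s W" and np: "\<not> (\<exists>i. pierced s U W i)"
    have "\<not> pat U W (4*k)" if k: "k < ?m" for k
    proof
      assume p: "pat U W (4*k)"
      have "pierced s U W (4*k+1)"
        using U W k p by (auto simp: pierced_def matched_def pat_def pstring_def balanced_def height_def)
      with np show False by blast
    qed
    moreover have "4 * ?m \<le> 2 * s" by linarith
    ultimately show "(U, W) \<in> S ?m (2*s - 4*?m)"
      using U W by (simp add: S_def pstring_def)
  qed
  have "E0 s \<le> card (S ?m (2*s - 4*?m))"
    unfolding E0_def by (rule card_mono[OF S_fin sub])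
  also have "\<dots> \<le> 255 ^ ?m * 4 ^ (2*s - 4*?m)" by (rule S_card)
  finally show ?thesis .
qed

lemma lim_aux: "(\<lambda>s::nat. 8 * real s ^ 2 * (real s + 1) ^ 2 * ((255/256) powr ((real s - 2)/2))) \<longlonglongrightarrow> 0"
  by real_asymp

lemma ratio_le:
  assumes "s > 0"
  shows "real (E0 s) / (catalan s)\<^sup>2 \<le> 8 * real s ^ 2 * (real s + 1) ^ 2 * ((255/256) powr ((real s - 2)/2))"
proof -
  define m where "m = (s-1) div 2"
  define lb where "lb = 4^s / (2 * real s * (real s + 1))"
  have lbpos: "lb > 0" using assms by (simp add: lb_def)
  have "lb \<le> catalan s"
  proof -
    have "lb = (4^s / (2 * real s)) / (real s + 1)" by (simp add: lb_def field_simps)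
    also have "\<dots> \<le> real ((2*s) choose s) / (real s + 1)"
      using central_binomial_lower_bound[OF assms] by (intro divide_right_mono) auto
    finally show ?thesis unfolding catalan_def by (simp only: of_nat_add of_nat_1)
  qed
  hence c2: "lb^2 \<le> (catalan s)^2" using lbpos by (intro power_mono) auto
  have nat4: "(4::nat) ^ (2*s - 4*m) * 256 ^ m = 16 ^ s"
  proof -
    have "4 * m \<le> 2 * s" unfolding m_def by linarith
    hence "(4::nat) ^ (2*s - 4*m) * 4 ^ (4*m) = 4 ^ (2*s)" by (simp add: power_add[symmetric])
    thus ?thesis by (simp add: power_mult)
  qed
  have E: "real (E0 s) \<le> 255 ^ m * 4 ^ (2*s - 4*m)"
  proof -
    have "E0 s \<le> 255^m*4^(2*s-4*m)" using E0_le[of s] by (simp only: m_def)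
    hence "real (E0 s) \<le> real (255^m*4^(2*s-4*m))" by (rule of_nat_mono)
    thus ?thesis by simp
  qed
  have c2pos: "(catalan s)^2 > 0" using c2 lbpos by (metis order_less_le_trans zero_less_power)
  have "real (E0 s) / (catalan s)\<^sup>2 \<le> real (E0 s) / lb^2"
    using c2 lbpos c2pos by (intro divide_left_mono) auto
  also have "\<dots> \<le> 255 ^ m * 4 ^ (2*s - 4*m) / lb^2"
    using E lbpos by (intro divide_right_mono) auto
  also have "\<dots> = 4 * real s ^ 2 * (real s + 1) ^ 2 * (255 ^ m * 4 ^ (2*s - 4*m) / 16 ^ s)"
  proof -
    have h16: "(4::real)^s * 4^s = 16^s" by (simp flip: power_mult_distrib)
    show ?thesis unfolding lb_def using assms h16 by (simp add: field_simps power2_eq_square)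
  qed
  also have "(255::real) ^ m * 4 ^ (2*s - 4*m) / 16 ^ s = (255/256) ^ m"
  proof -
    have r4: "(4::real) ^ (2*s - 4*m) * 256 ^ m = 16 ^ s"
      using arg_cong[OF nat4, of real] by simp
    thus ?thesis by (simp add: field_simps power_divide flip: r4)
  qed
  also have "(255/256::real) ^ m = (255/256) powr (real m)"
    by (simp add: powr_realpow)
  also have "(255/256::real) powr (real m) \<le> (255/256) powr ((real s - 2)/2)"
  proof -
    have "s \<le> 2*m + 2" unfolding m_def by presburger
    hence "real s \<le> 2 * real m + 2" by linarith
    hence "(real s - 2)/2 \<le> real m" by simp
    thus ?thesis by (intro powr_mono') auto
  qed
  hence "4 * real s ^ 2 * (real s + 1) ^ 2 * (255/256::real) powr (real m) \<le> 8 * real s ^ 2 * (real s + 1) ^ 2 * ((255/256) powr ((real s - 2)/2))"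
    by (intro mult_mono) auto
  finally show ?thesis .
qed

theorem proposition4p3:
  shows "(\<lambda>s. real (E0 s) / (catalan s)\<^sup>2) \<longlonglongrightarrow> 0"
proof (rule tendsto_sandwich[OF _ _ tendsto_const lim_aux])
  show "\<forall>\<^sub>F n in sequentially. 0 \<le> real (E0 n) / (catalan n)\<^sup>2" by simp
  show "\<forall>\<^sub>F n in sequentially. real (E0 n) / (catalan n)\<^sup>2 \<le> 8 * real n ^ 2 * (real n + 1) ^ 2 * ((255/256) powr ((real n - 2)/2))"
    using eventually_gt_at_top[of 0] by eventually_elim (rule ratio_le)
qed

end
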